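(* Let $s\in(1,2]$ and let $\alpha$ be a cardinal number with $\alpha\geq\aleph_0$. Then none of the sets $H_s[0,1]=\{f\in C[0,1]:\dim_H G_f([0,1])=s\}$, $\overline{B}_s[0,1]=\{f\in C[0,1]:\overline{\dim}_B G_f([0,1])=s\}$, $\underline{B}_s[0,1]=\{f\in C[0,1]:\underline{\dim}_B G_f([0,1])=s\}$ and $B_s[0,1]=\{f\in C[0,1]:\dim_B G_f([0,1])=s\}$ is $(\alpha,\beta)$-spaceable, for any cardinal number $\beta$.
   Context: $C[0,1]$ is the real Banach space of real-valued continuous functions on $[0,1]$ with the maximum norm. $G_f(X)=\{(x,f(x)):x\in X\}$. $\dim_H$, $\overline{\dim}_B$, $\underline{\dim}_B$, $\dim_B$ denote Hausdorff, upper box, lower box and box dimension ($\dim_B$ being defined when lower and upper box dimensions coincide). For cardinals $\alpha<\beta$, a subset $A$ of a topological vector space is $\alpha$-lineable if there is an $\alpha$-dimensional subspace $M\subseteq A\cup\{0\}$, and $(\alpha,\beta)$-spaceable if it is $\alpha$-lineable and every $\alpha$-dimensional subspace $W_\alpha\subseteq A\cup\{0\}$ is contained in a closed $\beta$-dimensional subspace $W_\beta\subseteq A\cup\{0\}$. *)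

theory Defs
  imports "HOL-Analysis.Analysis" "HOL-Library.Equipollence"
begin

definition hausdorff_pre :: "real \<Rightarrow> real \<Rightarrow> 'a::metric_space set \<Rightarrow> ennreal" where
  "hausdorff_pre s \<delta> E =
     (INF U \<in> {U :: nat \<Rightarrow> 'a set. E \<subseteq> (\<Union>i. U i) \<and> (\<forall>i. bounded (U i) \<and> diameter (U i) \<le> \<delta>)}.
        (\<Sum>i. ennreal (diameter (U i) powr s)))"

definition hausdorff_measure :: "real \<Rightarrow> 'a::metric_space set \<Rightarrow> ennreal" where
  "hausdorff_measure s E = (SUP \<delta> \<in> {0<..}. hausdorff_pre s \<delta> E)"

definition hausdorff_dim :: "'a::metric_space set \<Rightarrow> ereal" where
  "hausdorff_dim E = Inf {ereal s | s. 0 < s \<and> hausdorff_measure s E = 0}"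

definition cover_num :: "real \<Rightarrow> 'a::metric_space set \<Rightarrow> nat" where
  "cover_num \<delta> F = Inf {card C | C. finite C \<and> F \<subseteq> \<Union>C \<and> (\<forall>U\<in>C. bounded U \<and> diameter U \<le> \<delta>)}"

definition upper_box_dim :: "'a::metric_space set \<Rightarrow> ereal" where
  "upper_box_dim F = Limsup (at_right 0) (\<lambda>\<delta>. ereal (ln (real (cover_num \<delta> F)) / - ln \<delta>))"

definition lower_box_dim :: "'a::metric_space set \<Rightarrow> ereal" where
  "lower_box_dim F = Liminf (at_right 0) (\<lambda>\<delta>. ereal (ln (real (cover_num \<delta> F)) / - ln \<delta>))"

text \<open>C[0,1] is modelled (isometrically and linearly) as the closed subspace of bounded
  continuous functions on the reals that are constant outside [0,1], i.e. satisfy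
  f x = f (clamp x); restriction to [0,1] is a linear isometric bijection onto C[0,1]
  with the maximum norm.\<close>
definition C01 :: "(real \<Rightarrow>\<^sub>C real) set" where
  "C01 = {f. \<forall>x. apply_bcontfun f x = apply_bcontfun f (max 0 (min 1 x))}"

definition graph_on :: "(real \<Rightarrow> real) \<Rightarrow> real set \<Rightarrow> (real \<times> real) set" where
  "graph_on f X = {(x, f x) | x. x \<in> X}"

definition H_set :: "real \<Rightarrow> (real \<Rightarrow>\<^sub>C real) set" where
  "H_set s = {f \<in> C01. hausdorff_dim (graph_on (apply_bcontfun f) {0..1}) = ereal s}"

definition Bupper_set :: "real \<Rightarrow> (real \<Rightarrow>\<^sub>C real) set" where
  "Bupper_set s = {f \<in> C01. upper_box_dim (graph_on (apply_bcontfun f) {0..1}) = ereal s}"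

definition Blower_set :: "real \<Rightarrow> (real \<Rightarrow>\<^sub>C real) set" where
  "Blower_set s = {f \<in> C01. lower_box_dim (graph_on (apply_bcontfun f) {0..1}) = ereal s}"

definition B_set :: "real \<Rightarrow> (real \<Rightarrow>\<^sub>C real) set" where
  "B_set s = {f \<in> C01. lower_box_dim (graph_on (apply_bcontfun f) {0..1}) = ereal s
                    \<and> upper_box_dim (graph_on (apply_bcontfun f) {0..1}) = ereal s}"

section \<open>Lineability and spaceability (cardinals represented by sets, up to equipollence)\<close>

definition has_hamel_dim :: "'v::real_vector set \<Rightarrow> 'c set \<Rightarrow> bool" where
  "has_hamel_dim W A \<longleftrightarrow> (\<exists>B. B \<subseteq> W \<and> independent B \<and> span B = W \<and> B \<approx> A)"

definition lineable :: "'v::real_vector set \<Rightarrow> 'c set \<Rightarrow> bool" where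
  "lineable S A \<longleftrightarrow> (\<exists>M. subspace M \<and> M \<subseteq> S \<union> {0} \<and> has_hamel_dim M A)"

definition spaceable :: "'v::real_normed_vector set \<Rightarrow> 'c set \<Rightarrow> 'd set \<Rightarrow> bool" where
  "spaceable S A B \<longleftrightarrow> lineable S A \<and>
     (\<forall>W. subspace W \<and> W \<subseteq> S \<union> {0} \<and> has_hamel_dim W A \<longrightarrow>
        (\<exists>V. subspace V \<and> closed V \<and> W \<subseteq> V \<and> V \<subseteq> S \<union> {0} \<and> has_hamel_dim V B))"

end

theory Submission
  imports Defs "HOL-Real_Asymp.Real_Asymp"
begin


lemma not_spaceable_abs:
  fixes S :: "'v::real_normed_vector set" and g :: 'v and A :: "'a set" and B :: "'b set"
  assumes inv: "\<And>f c. f \<in> S \<Longrightarrow> f + c *\<^sub>R g \<in> S"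
    and z: "0 \<notin> S" and g0: "g \<noteq> 0" and infA: "infinite A"
  shows "\<not> spaceable S A B"
proof
  assume sp: "spaceable S A B"
  then have "lineable S A" by (simp add: spaceable_def)
  then obtain M where M: "subspace M" "M \<subseteq> S \<union> {0}" "has_hamel_dim M A"
    unfolding lineable_def by blast
  then obtain Bm where Bm: "Bm \<subseteq> M" "independent Bm" "span Bm = M" "Bm \<approx> A"
    unfolding has_hamel_dim_def by blast
  have "infinite Bm" using Bm(4) infA eqpoll_finite_iff by blast
  then obtain b :: "nat \<Rightarrow> 'v" where b: "inj b" "range b \<subseteq> Bm"
    using infinite_countable_subset by blast
  have bB: "b n \<in> Bm" for n using b(2) by (rule range_subsetD)
  have b0: "b n \<noteq> 0" for n
  proof
    assume "b n = 0"
    then have "0 \<in> Bm" using bB[of n] by simp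
    then show False using Bm(2) dependent_zero by metis
  qed
  define h where "h x = real (Suc (inv b x)) * norm x" for x
  obtain l where l: "linear l" "\<forall>x\<in>Bm. l x = h x"
    using linear_independent_extend[OF Bm(2)] by blast
  define L where "L w = w + l w *\<^sub>R g" for w
  have linL: "linear L" unfolding L_def
    by (rule linearI) (simp_all add: linear_add[OF l(1)] linear_scale[OF l(1)] algebra_simps)
  have cg: "c *\<^sub>R g \<notin> S" for c
  proof
    assume "c *\<^sub>R g \<in> S"
    from inv[OF this, of "-c"] z show False by simp
  qed
  have LS: "L w \<in> S \<union> {0}" if "w \<in> M" for w
  proof (cases "w = 0")
    case True then show ?thesis using linL by (simp add: linear_0)
  next
    case False then have "w \<in> S" using M(2) that by blast
    then show ?thesis unfolding L_def using inv by blast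
  qed
  have injL: "inj_on L M"
    unfolding inj_on_def
  proof (intro ballI impI)
    fix x y assume xy: "x \<in> M" "y \<in> M" "L x = L y"
    then have "L (x - y) = 0" using linL by (simp add: linear_diff)
    moreover have "x - y \<in> M" using M(1) xy by (simp add: subspace_diff)
    ultimately show "x = y"
    proof -
      assume "L (x - y) = 0" "x - y \<in> M"
      show ?thesis
      proof (rule ccontr)
        assume "x \<noteq> y"
        then have "x - y \<in> S" using M(2) \<open>x - y \<in> M\<close> by auto
        have "x - y = (- l (x - y)) *\<^sub>R g" using \<open>L (x - y) = 0\<close> unfolding L_def
          by (simp add: add_eq_0_iff)
        then show False using cg \<open>x - y \<in> S\<close> by metis
      qed
    qed
  qed
  define W where "W = L ` M"
  have W: "subspace W" "W \<subseteq> S \<union> {0}" "has_hamel_dim W A"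
  proof -
    show "subspace W" unfolding W_def using linear_subspace_image[OF linL M(1)] .
    show "W \<subseteq> S \<union> {0}" unfolding W_def using LS by blast
    have "inj_on L (span Bm)" using injL Bm(3) by simp
    then have "independent (L ` Bm)" using linear_independent_injective_image[OF linL Bm(2)] by blast
    moreover have "span (L ` Bm) = W" unfolding W_def using span_linear_image[OF linL] Bm(3) by simp
    moreover have "L ` Bm \<approx> A"
    proof -
      have "inj_on L Bm" using injL Bm(1) inj_on_subset by blast
      then have "L ` Bm \<approx> Bm" by (simp add: eqpoll_sym inj_on_image_eqpoll_self)
      then show ?thesis using Bm(4) eqpoll_trans by blast
    qed
    moreover have "L ` Bm \<subseteq> W" unfolding W_def using Bm(1) by blast
    ultimately show "has_hamel_dim W A" unfolding has_hamel_dim_def by blast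
  qed
  then obtain V where V: "subspace V" "closed V" "W \<subseteq> V" "V \<subseteq> S \<union> {0}"
    using sp unfolding spaceable_def by blast
  define w where "w n = (1 / (real (Suc n) * norm (b n))) *\<^sub>R b n" for n
  have lw: "l (w n) = 1" for n
  proof -
    have "b n \<in> Bm" using bB .
    then have "l (b n) = real (Suc n) * norm (b n)" using l(2) b(1) by (simp add: h_def)
    then show ?thesis unfolding w_def using linear_scale[OF l(1)] b0[of n] by simp
  qed
  have wM: "w n \<in> M" for n
    unfolding w_def using bB[of n] Bm(1) by (intro subspace_scale[OF M(1)]) blast
  have nw: "norm (w n) = 1 / real (Suc n)" for n
    unfolding w_def using b0[of n] by simp
  have "(\<lambda>n. norm (w n)) \<longlonglongrightarrow> 0"
    unfolding nw by (rule LIMSEQ_Suc[OF lim_inverse_n'])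
  then have "w \<longlonglongrightarrow> 0" by (simp only: tendsto_norm_zero_iff)
  then have "(\<lambda>n. L (w n)) \<longlonglongrightarrow> g"
    unfolding L_def lw using tendsto_add[of w 0 sequentially "\<lambda>_. g" g] by simp
  moreover have "L (w n) \<in> V" for n
  proof -
    have "L (w n) \<in> W" unfolding W_def using wM[of n] by (rule imageI)
    then show ?thesis using V(3) by (rule subsetD[rotated])
  qed
  ultimately have "g \<in> V" using closed_sequentially[OF V(2)] by metis
  then have "g \<in> S \<union> {0}" using V(4) by (rule subsetD[rotated])
  then have "g \<in> S" using g0 by simp
  then have "0 *\<^sub>R g \<in> S" using inv[of g "-1"] by simp
  then show False using cg by blast
qed


lemma diam_transl:
  fixes v :: "'a::real_normed_vector"
  shows "diameter ((+) v ` U) = diameter U"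
proof -
  have "(\<lambda>(x,y). dist x y) ` ((+) v ` U \<times> (+) v ` U) = (\<lambda>(x,y). dist x y) ` (U \<times> U)"
  proof (rule set_eqI, rule iffI)
    fix d assume "d \<in> (\<lambda>(x,y). dist x y) ` ((+) v ` U \<times> (+) v ` U)"
    then obtain x y where xy: "x \<in> U" "y \<in> U" "d = dist (v + x) (v + y)" by auto
    then show "d \<in> (\<lambda>(x,y). dist x y) ` (U \<times> U)"
      by (intro image_eqI[of _ _ "(x,y)"]) (auto simp: dist_norm)
  next
    fix d assume "d \<in> (\<lambda>(x,y). dist x y) ` (U \<times> U)"
    then obtain x y where xy: "x \<in> U" "y \<in> U" "d = dist x y" by auto
    then show "d \<in> (\<lambda>(x,y). dist x y) ` ((+) v ` U \<times> (+) v ` U)"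
      by (intro image_eqI[of _ _ "(v + x, v + y)"]) (auto simp: dist_norm)
  qed
  moreover have "((+) v ` U = {}) = (U = {})" by simp
  ultimately show ?thesis unfolding diameter_def by (simp only:)
qed

lemma hp_transl_le:
  fixes v :: "'a::real_normed_vector"
  shows "hausdorff_pre s \<delta> ((+) v ` E) \<le> hausdorff_pre s \<delta> E"
  unfolding hausdorff_pre_def
proof (rule INF_mono)
  fix U :: "nat \<Rightarrow> 'a set"
  assume U: "U \<in> {U. E \<subseteq> (\<Union>i. U i) \<and> (\<forall>i. bounded (U i) \<and> diameter (U i) \<le> \<delta>)}"
  let ?U = "\<lambda>i. (+) v ` U i"
  have mem: "?U \<in> {U. (+) v ` E \<subseteq> (\<Union>i. U i) \<and> (\<forall>i. bounded (U i) \<and> diameter (U i) \<le> \<delta>)}"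
  proof -
    have "E \<subseteq> (\<Union>i. U i)" using U by simp
    then have "(+) v ` E \<subseteq> (\<Union>i. ?U i)" by (simp add: image_UN[symmetric] image_mono)
    moreover have "\<forall>i. bounded (?U i) \<and> diameter (?U i) \<le> \<delta>"
      using U by (simp add: diam_transl bounded_translation)
    ultimately show ?thesis by simp
  qed
  have le: "(\<Sum>i. ennreal (diameter (?U i) powr s)) \<le> (\<Sum>i. ennreal (diameter (U i) powr s))"
    by (simp add: diam_transl)
  show "\<exists>U'\<in>{U. (+) v ` E \<subseteq> (\<Union>i. U i) \<and> (\<forall>i. bounded (U i) \<and> diameter (U i) \<le> \<delta>)}.
      (\<Sum>i. ennreal (diameter (U' i) powr s)) \<le> (\<Sum>i. ennreal (diameter (U i) powr s))"
    using le mem by (rule bexI)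
qed

lemma hp_transl:
  fixes v :: "'a::real_normed_vector"
  shows "hausdorff_pre s \<delta> ((+) v ` E) = hausdorff_pre s \<delta> E"
proof (rule antisym)
  show "hausdorff_pre s \<delta> ((+) v ` E) \<le> hausdorff_pre s \<delta> E" by (rule hp_transl_le)
  have "hausdorff_pre s \<delta> ((+) (-v) ` ((+) v ` E)) \<le> hausdorff_pre s \<delta> ((+) v ` E)" by (rule hp_transl_le)
  moreover have "(+) (-v) ` ((+) v ` E) = E" by (simp add: image_image)
  ultimately show "hausdorff_pre s \<delta> E \<le> hausdorff_pre s \<delta> ((+) v ` E)" by simp
qed

lemma hdim_transl:
  fixes v :: "'a::real_normed_vector"
  shows "hausdorff_dim ((+) v ` E) = hausdorff_dim E"
  unfolding hausdorff_dim_def hausdorff_measure_def hp_transl ..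

lemma cn_sub:
  fixes v :: "'a::real_normed_vector"
  shows "{card C | C. finite C \<and> F \<subseteq> \<Union>C \<and> (\<forall>U\<in>C. bounded U \<and> diameter U \<le> \<delta>)} \<subseteq>
    {card C | C. finite C \<and> (+) v ` F \<subseteq> \<Union>C \<and> (\<forall>U\<in>C. bounded U \<and> diameter U \<le> \<delta>)}"
proof
  fix k assume "k \<in> {card C | C. finite C \<and> F \<subseteq> \<Union>C \<and> (\<forall>U\<in>C. bounded U \<and> diameter U \<le> \<delta>)}"
  then obtain C where C: "k = card C" "finite C" "F \<subseteq> \<Union>C" "\<forall>U\<in>C. bounded U \<and> diameter U \<le> \<delta>"
    by blast
  let ?C = "(\<lambda>U. (+) v ` U) ` C"
  have inj: "inj_on (\<lambda>U. (+) v ` U) C"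
    by (rule inj_onI) (simp add: inj_image_eq_iff)
  have "card ?C = k" using C(1) card_image[OF inj] by simp
  moreover have "finite ?C" using C(2) by simp
  moreover have "(+) v ` F \<subseteq> \<Union>?C" using C(3) by (simp add: image_Union[symmetric] image_mono)
  moreover have "\<forall>U\<in>?C. bounded U \<and> diameter U \<le> \<delta>" using C(4) by (auto simp: diam_transl bounded_translation)
  ultimately show "k \<in> {card C | C. finite C \<and> (+) v ` F \<subseteq> \<Union>C \<and> (\<forall>U\<in>C. bounded U \<and> diameter U \<le> \<delta>)}"
    by (intro CollectI exI[of _ ?C]) simp
qed

lemma cn_transl:
  fixes v :: "'a::real_normed_vector"
  shows "cover_num \<delta> ((+) v ` F) = cover_num \<delta> F"
proof -
  have "{card C | C. finite C \<and> (+) v ` F \<subseteq> \<Union>C \<and> (\<forall>U\<in>C. bounded U \<and> diameter U \<le> \<delta>)}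
     = {card C | C. finite C \<and> F \<subseteq> \<Union>C \<and> (\<forall>U\<in>C. bounded U \<and> diameter U \<le> \<delta>)}"
  proof
    show "{card C | C. finite C \<and> F \<subseteq> \<Union>C \<and> (\<forall>U\<in>C. bounded U \<and> diameter U \<le> \<delta>)} \<subseteq> 
       {card C | C. finite C \<and> (+) v ` F \<subseteq> \<Union>C \<and> (\<forall>U\<in>C. bounded U \<and> diameter U \<le> \<delta>)}"
      by (rule cn_sub)
    have "(+) (-v) ` ((+) v ` F) = F" by (simp add: image_image)
    then show "{card C | C. finite C \<and> (+) v ` F \<subseteq> \<Union>C \<and> (\<forall>U\<in>C. bounded U \<and> diameter U \<le> \<delta>)} \<subseteq> 
       {card C | C. finite C \<and> F \<subseteq> \<Union>C \<and> (\<forall>U\<in>C. bounded U \<and> diameter U \<le> \<delta>)}"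
      using cn_sub[of "(+) v ` F" \<delta> "-v"] by simp
  qed
  then show ?thesis unfolding cover_num_def by simp
qed

lemma ubd_transl:
  fixes v :: "'a::real_normed_vector"
  shows "upper_box_dim ((+) v ` E) = upper_box_dim E"
  unfolding upper_box_dim_def cn_transl ..

lemma lbd_transl:
  fixes v :: "'a::real_normed_vector"
  shows "lower_box_dim ((+) v ` E) = lower_box_dim E"
  unfolding lower_box_dim_def cn_transl ..

definition g1 :: "real \<Rightarrow>\<^sub>C real" where "g1 = const_bcontfun 1"

lemma graph_shift:
  "graph_on (apply_bcontfun (f + c *\<^sub>R g1)) X = (+) (0, c) ` graph_on (apply_bcontfun f) X"
proof -
  have e: "apply_bcontfun (f + c *\<^sub>R g1) = (\<lambda>x. apply_bcontfun f x + c)"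
    by (rule ext) (simp add: g1_def const_bcontfun.rep_eq)
  show ?thesis unfolding e graph_on_def
  proof (rule set_eqI, rule iffI)
    fix p assume "p \<in> {(x, apply_bcontfun f x + c) |x. x \<in> X}"
    then obtain x where x: "x \<in> X" "p = (x, apply_bcontfun f x + c)" by blast
    then show "p \<in> (+) (0, c) ` {(x, apply_bcontfun f x) |x. x \<in> X}"
      by (intro image_eqI[of _ _ "(x, apply_bcontfun f x)"]) auto
  next
    fix p assume "p \<in> (+) (0, c) ` {(x, apply_bcontfun f x) |x. x \<in> X}"
    then obtain x where x: "x \<in> X" "p = (0, c) + (x, apply_bcontfun f x)" by blast
    then show "p \<in> {(x, apply_bcontfun f x + c) |x. x \<in> X}" by (auto simp: add.commute)
  qed
qed

lemma C01_shift: "f \<in> C01 \<Longrightarrow> f + c *\<^sub>R g1 \<in> C01"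
  unfolding C01_def g1_def by (simp add: const_bcontfun.rep_eq)

lemma H_shift: "f \<in> H_set s \<Longrightarrow> f + c *\<^sub>R g1 \<in> H_set s"
  unfolding H_set_def mem_Collect_eq graph_shift hdim_transl using C01_shift by simp
lemma Bu_shift: "f \<in> Bupper_set s \<Longrightarrow> f + c *\<^sub>R g1 \<in> Bupper_set s"
  unfolding Bupper_set_def mem_Collect_eq graph_shift ubd_transl using C01_shift by simp
lemma Bl_shift: "f \<in> Blower_set s \<Longrightarrow> f + c *\<^sub>R g1 \<in> Blower_set s"
  unfolding Blower_set_def mem_Collect_eq graph_shift lbd_transl using C01_shift by simp
lemma B_shift: "f \<in> B_set s \<Longrightarrow> f + c *\<^sub>R g1 \<in> B_set s"
  unfolding B_set_def mem_Collect_eq graph_shift lbd_transl ubd_transl using C01_shift by simp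

lemma g1_ne: "g1 \<noteq> 0"
proof
  assume "g1 = 0"
  then have "apply_bcontfun g1 0 = apply_bcontfun 0 0" by simp
  then show False unfolding g1_def by (simp add: const_bcontfun.rep_eq)
qed



definition G0 :: "(real \<times> real) set" where "G0 = graph_on (\<lambda>x. 0) {0..1}"

lemma dist00: "dist (a, 0::real) (c, 0) = dist a (c::real)"
  by (simp add: dist_Pair_Pair)

lemma cover_pt:
  assumes n: "n > 0" and p: "p \<in> G0"
  shows "\<exists>i\<le>n. p \<in> cball (real i / real n, 0) (1 / real n)"
proof -
  obtain x where x: "x \<in> {0..1}" "p = (x, 0)" using p unfolding G0_def graph_on_def by blast
  define i where "i = nat \<lfloor>x * real n\<rfloor>"
  have xn: "0 \<le> x * real n" "x * real n \<le> real n" using x(1) n by (auto simp: mult_le_cancel_right1)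
  have fl0: "0 \<le> \<lfloor>x * real n\<rfloor>" using xn by simp
  have ri: "real i = of_int \<lfloor>x * real n\<rfloor>" unfolding i_def using fl0 by simp
  have "real i \<le> x * real n" "x * real n < real i + 1" unfolding ri by linarith+
  then have a: "real i / real n \<le> x" "x < real i / real n + 1 / real n" using n
    by (auto simp: field_simps)
  have "real i \<le> real n" using \<open>real i \<le> x * real n\<close> xn by linarith
  then have "i \<le> n" by simp
  moreover have "dist (real i / real n, 0) p \<le> 1 / real n"
    unfolding x(2) dist00 using a by (simp add: dist_real_def)
  ultimately show ?thesis by auto
qed

lemma hp_G0:
  assumes t: "t > 1" and d: "\<delta> > 0"
  shows "hausdorff_pre t \<delta> G0 = 0"
proof (rule antisym)
  show "hausdorff_pre t \<delta> G0 \<le> 0"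
  proof (rule ennreal_le_epsilon)
    fix e :: real assume e: "0 < e"
    have "(\<lambda>n. real n powr (1 - t)) \<longlonglongrightarrow> 0"
      using t by (intro tendsto_neg_powr filterlim_real_sequentially) simp
    moreover have "e / (2 * 2 powr t) > 0" using e by simp
    ultimately have "eventually (\<lambda>n. real n powr (1 - t) < e / (2 * 2 powr t)) sequentially"
      by (rule order_tendstoD(2))
    then obtain N where N: "\<And>n. n \<ge> N \<Longrightarrow> real n powr (1 - t) < e / (2 * 2 powr t)"
      unfolding eventually_sequentially by blast
    define n where "n = max N (nat \<lceil>2 / \<delta>\<rceil>) + 1"
    have n0: "n > 0" and nN: "n \<ge> N" unfolding n_def by auto
    have "real (nat \<lceil>2 / \<delta>\<rceil>) \<ge> 2 / \<delta>" by linarith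
    then have "real n \<ge> 2 / \<delta>" unfolding n_def by linarith
    then have dn: "2 / real n \<le> \<delta>" using d n0 by (auto simp: field_simps)
    define U where "U i = (if i \<le> n then cball (real i / real n, 0::real) (1 / real n) else {})" for i
    have cov: "U \<in> {U. G0 \<subseteq> (\<Union>i. U i) \<and> (\<forall>i. bounded (U i) \<and> diameter (U i) \<le> \<delta>)}"
    proof -
      have "G0 \<subseteq> (\<Union>i. U i)"
      proof
        fix p assume "p \<in> G0"
        then obtain i where "i \<le> n" "p \<in> cball (real i / real n, 0) (1 / real n)"
          using cover_pt[OF n0] by blast
        then show "p \<in> (\<Union>i. U i)" unfolding U_def by (intro UN_I[of i]) auto
      qed
      moreover have "bounded (U i) \<and> diameter (U i) \<le> \<delta>" for i
        unfolding U_def using dn d by auto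
      ultimately show ?thesis by simp
    qed
    define q where "q = (2 / real n) powr t"
    have dU: "ennreal (diameter (U i) powr t) = (if i \<le> n then ennreal q else 0)" for i
      unfolding U_def q_def using n0 by simp
    have "(\<Sum>i. ennreal (diameter (U i) powr t)) = (\<Sum>i\<in>{..n}. ennreal (diameter (U i) powr t))"
      by (rule suminf_finite) (auto simp: dU)
    also have "\<dots> = (\<Sum>i\<in>{..n}. ennreal q)" by (simp add: dU)
    also have "\<dots> = ennreal (real (n + 1) * q)"
      by (subst ennreal_mult) (auto simp: q_def ennreal_of_nat_eq_real_of_nat)
    also have "\<dots> \<le> ennreal e"
    proof (rule ennreal_leI)
      have np: "real n powr t > 0" using n0 by simp
      have "real (n + 1) * q = real (n + 1) * 2 powr t / real n powr t"
        unfolding q_def using n0 by (simp add: powr_divide)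
      also have "\<dots> \<le> (2 * real n) * 2 powr t / real n powr t"
        using n0 np by (intro divide_right_mono mult_right_mono) auto
      also have "\<dots> = 2 * 2 powr t * (real n / real n powr t)" by simp
      also have "real n / real n powr t = real n powr (1 - t)"
        using n0 by (simp add: powr_diff)
      also have "2 * 2 powr t * real n powr (1 - t) \<le> 2 * 2 powr t * (e / (2 * 2 powr t))"
        using N[OF nN] by (intro mult_left_mono) auto
      also have "\<dots> = e" by simp
      finally show "real (n + 1) * q \<le> e" .
    qed
    finally have "(\<Sum>i. ennreal (diameter (U i) powr t)) \<le> ennreal e" .
    moreover have "hausdorff_pre t \<delta> G0 \<le> (\<Sum>i. ennreal (diameter (U i) powr t))"
      unfolding hausdorff_pre_def using cov by (rule INF_lower)
    ultimately show "hausdorff_pre t \<delta> G0 \<le> 0 + ennreal e" by simp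
  qed
qed simp

lemma hdim_G0:
  assumes s: "s > 1"
  shows "hausdorff_dim G0 < ereal s"
proof -
  define t where "t = (1 + s) / 2"
  have t: "t > 1" "t < s" "t > 0" using s unfolding t_def by auto
  have "hausdorff_measure t G0 = (SUP \<delta>\<in>{0::real<..}. (0::ennreal))"
    unfolding hausdorff_measure_def by (rule SUP_cong) (auto simp: hp_G0 t)
  then have "hausdorff_measure t G0 = 0" by simp
  then have "hausdorff_dim G0 \<le> ereal t"
    unfolding hausdorff_dim_def using t by (intro Inf_lower) auto
  then show ?thesis using t by (simp add: order_le_less_trans)
qed

lemma cn_G0:
  assumes d: "0 < \<delta>" "\<delta> < 1"
  shows "real (cover_num \<delta> G0) \<le> 4 / \<delta>"
proof -
  define n where "n = nat \<lceil>2 / \<delta>\<rceil>"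
  have p2: "2 / \<delta> > 0" using d by simp
  then have rn: "real n = of_int \<lceil>2 / \<delta>\<rceil>" unfolding n_def by simp
  have n1: "real n \<ge> 2 / \<delta>" "real n < 2 / \<delta> + 1" unfolding rn by linarith+
  then have n0: "n > 0" using p2 by linarith
  have dn: "2 / real n \<le> \<delta>" using d n0 n1 by (auto simp: field_simps)
  define C where "C = (\<lambda>i. cball (real i / real n, 0::real) (1 / real n)) ` {..n}"
  have fC: "finite C" unfolding C_def by simp
  have cC: "card C \<le> n + 1" unfolding C_def using card_image_le[of "{..n}"] by simp
  have covC: "G0 \<subseteq> \<Union>C"
  proof
    fix p assume "p \<in> G0"
    then obtain i where "i \<le> n" "p \<in> cball (real i / real n, 0) (1 / real n)"
      using cover_pt[OF n0] by blast
    then show "p \<in> \<Union>C" unfolding C_def by blast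
  qed
  have bC: "\<forall>U\<in>C. bounded U \<and> diameter U \<le> \<delta>" unfolding C_def using dn n0 by auto
  have "card C \<in> {card C | C. finite C \<and> G0 \<subseteq> \<Union>C \<and> (\<forall>U\<in>C. bounded U \<and> diameter U \<le> \<delta>)}"
    using fC covC bC by blast
  then have "cover_num \<delta> G0 \<le> card C" unfolding cover_num_def by (rule cInf_lower) simp
  then have "real (cover_num \<delta> G0) \<le> real n + 1" using cC by linarith
  also have "\<dots> \<le> 2 / \<delta> + 2" using n1 by linarith
  also have "\<dots> \<le> 4 / \<delta>"
  proof -
    have "2 \<le> 2 / \<delta>" using d by (simp add: field_simps)
    then show ?thesis by (simp add: field_simps)
  qed
  finally show ?thesis .
qed

lemma ratio_G0:
  assumes d: "0 < \<delta>" "\<delta> < 1"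
  shows "ln (real (cover_num \<delta> G0)) / - ln \<delta> \<le> 1 + ln 4 / - ln \<delta>"
proof -
  have l: "- ln \<delta> > 0" using d by simp
  have "ln (real (cover_num \<delta> G0)) \<le> ln (4 / \<delta>)"
  proof (cases "cover_num \<delta> G0 = 0")
    case True
    have "4 / \<delta> > 1" using d by (simp add: field_simps)
    then show ?thesis using True by simp
  next
    case False
    then show ?thesis using cn_G0[OF d] d by (subst ln_le_cancel_iff) auto
  qed
  also have "ln (4 / \<delta>) = ln 4 - ln \<delta>" using d by (simp add: ln_div)
  finally have "ln (real (cover_num \<delta> G0)) / - ln \<delta> \<le> (ln 4 - ln \<delta>) / - ln \<delta>"
    using l by (intro divide_right_mono) auto
  also have "\<dots> = 1 + ln 4 / - ln \<delta>" using l by (simp add: field_simps)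
  finally show ?thesis .
qed

lemma ubd_G0: "upper_box_dim G0 \<le> 1"
proof -
  have ev: "eventually (\<lambda>\<delta>. ereal (ln (real (cover_num \<delta> G0)) / - ln \<delta>) \<le> ereal (1 + ln 4 / - ln \<delta>)) (at_right (0::real))"
    unfolding eventually_at_right_field
  proof (intro exI[of _ 1] conjI allI impI)
    fix y :: real assume "0 < y" "y < 1"
    then show "ereal (ln (real (cover_num y G0)) / - ln y) \<le> ereal (1 + ln 4 / - ln y)"
      by (subst ereal_less_eq(3)) (rule ratio_G0)
  qed simp
  have "((\<lambda>\<delta>::real. 1 + ln 4 / - ln \<delta>) \<longlongrightarrow> 1) (at_right 0)" by real_asymp
  then have "((\<lambda>\<delta>::real. ereal (1 + ln 4 / - ln \<delta>)) \<longlongrightarrow> ereal 1) (at_right 0)" by simp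
  then have "Limsup (at_right 0) (\<lambda>\<delta>::real. ereal (1 + ln 4 / - ln \<delta>)) = ereal 1"
    by (intro lim_imp_Limsup) (auto simp: trivial_limit_at_right_real)
  moreover have "upper_box_dim G0 \<le> Limsup (at_right 0) (\<lambda>\<delta>::real. ereal (1 + ln 4 / - ln \<delta>))"
    unfolding upper_box_dim_def using ev by (rule Limsup_mono)
  ultimately show ?thesis by (simp add: one_ereal_def)
qed

lemma lbd_G0: "lower_box_dim G0 \<le> 1"
proof -
  have "lower_box_dim G0 \<le> upper_box_dim G0"
    unfolding lower_box_dim_def upper_box_dim_def
    by (rule Liminf_le_Limsup) (simp add: trivial_limit_at_right_real)
  then show ?thesis using ubd_G0 by simp
qed


lemma zero_graph: "graph_on (apply_bcontfun 0) {0..1} = G0"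
proof -
  have "apply_bcontfun (0 :: real \<Rightarrow>\<^sub>C real) = (\<lambda>x. 0)" by (rule ext) simp
  then show ?thesis unfolding G0_def by simp
qed

lemma zero_notin:
  assumes s: "1 < s"
  shows "0 \<notin> H_set s" "0 \<notin> Bupper_set s" "0 \<notin> Blower_set s" "0 \<notin> B_set s"
proof -
  have s1: "(1::ereal) < ereal s" using s by (simp add: one_ereal_def)
  show "0 \<notin> H_set s" unfolding H_set_def mem_Collect_eq zero_graph using hdim_G0[OF s] by auto
  show "0 \<notin> Bupper_set s" unfolding Bupper_set_def mem_Collect_eq zero_graph using ubd_G0 s1 by auto
  show "0 \<notin> Blower_set s" unfolding Blower_set_def mem_Collect_eq zero_graph using lbd_G0 s1 by auto
  show "0 \<notin> B_set s" unfolding B_set_def mem_Collect_eq zero_graph using lbd_G0 s1 by auto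
qed

theorem corollary2p11:
  fixes s :: real and A :: "'a set" and B :: "'b set"
  assumes "1 < s" and "s \<le> 2"
    and "infinite A"
    and "A \<prec> B"
  shows "\<not> spaceable (H_set s) A B \<and> \<not> spaceable (Bupper_set s) A B
       \<and> \<not> spaceable (Blower_set s) A B \<and> \<not> spaceable (B_set s) A B"
  using not_spaceable_abs[OF H_shift zero_notin(1)[OF assms(1)] g1_ne assms(3)]
    not_spaceable_abs[OF Bu_shift zero_notin(2)[OF assms(1)] g1_ne assms(3)]
    not_spaceable_abs[OF Bl_shift zero_notin(3)[OF assms(1)] g1_ne assms(3)]
    not_spaceable_abs[OF B_shift zero_notin(4)[OF assms(1)] g1_ne assms(3)]
  by blast

end
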